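(* Let $(E,\tau)$ be a locally solid vector lattice. Then $\tau$ is locally solidly submetrisable if and only if $C_\tau=E$.
   Context: All vector lattices are real and Archimedean; linear topologies are Hausdorff. A locally solid topology on a vector lattice is a linear topology such that zero has a neighbourhood basis of solid sets. A locally solid topology on a vector lattice $G$ is solidly submetrisable if it is finer than some metrisable locally solid topology on $G$. $\tau$ is locally solidly submetrisable if for every $x\in E$ the restriction $\tau|_{B_x}$ to the band $B_x$ generated by $x$ is solidly submetrisable. A sequence $(V_n)_{n\geq1}$ of $\tau$-neighbourhoods of zero is normal if $V_{n+1}+V_{n+1}\subseteq V_n$ for all $n$. The carrier of $\tau$ is $C_\tau=\bigcup\{N^{\mathrm d}: N=\bigcap_{n\geq1}V_n \text{ for some normal sequence }(V_n)\text{ of solid }\tau\text{-neighbourhoods of zero}\}$, where $N^{\mathrm d}$ is the disjoint complement of $N$ in $E$. *)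

theory Defs
  imports "HOL-Analysis.Analysis"
begin

text \<open>A real vector lattice is modelled as a type of class ordered_real_vector which is
  moreover a lattice (w.r.t. the same order). Archimedean property is an explicit hypothesis.\<close>

definition vabs :: "'a::{ordered_real_vector,lattice} \<Rightarrow> 'a" where
  "vabs x = sup x (- x)"

definition archimedean_vl :: "'a::{ordered_real_vector,lattice} itself \<Rightarrow> bool" where
  "archimedean_vl _ \<longleftrightarrow>
     (\<forall>x y::'a. 0 \<le> x \<and> (\<forall>n::nat. real n *\<^sub>R x \<le> y) \<longrightarrow> x = 0)"

definition disjoint_complement :: "'a::{ordered_real_vector,lattice} set \<Rightarrow> 'a set" where
  "disjoint_complement N = {y. \<forall>z\<in>N. inf (vabs y) (vabs z) = 0}"

definition solid :: "'a::{ordered_real_vector,lattice} set \<Rightarrow> bool" where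
  "solid A \<longleftrightarrow> (\<forall>x\<in>A. \<forall>y. vabs y \<le> vabs x \<longrightarrow> y \<in> A)"

definition is_sup_of :: "'a::{ordered_real_vector,lattice} set \<Rightarrow> 'a \<Rightarrow> bool" where
  "is_sup_of D s \<longleftrightarrow> (\<forall>d\<in>D. d \<le> s) \<and> (\<forall>u. (\<forall>d\<in>D. d \<le> u) \<longrightarrow> s \<le> u)"

definition ideal_vl :: "'a::{ordered_real_vector,lattice} set \<Rightarrow> bool" where
  "ideal_vl I \<longleftrightarrow> 0 \<in> I \<and> (\<forall>x\<in>I. \<forall>y\<in>I. x + y \<in> I) \<and>
     (\<forall>c. \<forall>x\<in>I. c *\<^sub>R x \<in> I) \<and> solid I"

definition band :: "'a::{ordered_real_vector,lattice} set \<Rightarrow> bool" where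
  "band B \<longleftrightarrow> ideal_vl B \<and> (\<forall>D s. D \<subseteq> B \<and> is_sup_of D s \<longrightarrow> s \<in> B)"

definition band_generated :: "'a::{ordered_real_vector,lattice} \<Rightarrow> 'a set" where
  "band_generated x = \<Inter>{B. band B \<and> x \<in> B}"

definition nbhd0 :: "'a::{ordered_real_vector,lattice} topology \<Rightarrow> 'a set \<Rightarrow> bool" where
  "nbhd0 T V \<longleftrightarrow> (\<exists>W. openin T W \<and> 0 \<in> W \<and> W \<subseteq> V)"

definition linear_topology_on :: "'a::{ordered_real_vector,lattice} set \<Rightarrow> 'a topology \<Rightarrow> bool" where
  "linear_topology_on S T \<longleftrightarrow> topspace T = S \<and> Hausdorff_space T \<and>
     continuous_map (prod_topology T T) T (\<lambda>(a, b). a + b) \<and>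
     continuous_map (prod_topology euclideanreal T) T (\<lambda>(c, a). c *\<^sub>R a)"

text \<open>Locally solid topology on the sub vector lattice S (for an ideal S, solidity in S
  is the same as solidity in E of a subset of S).\<close>
definition locally_solid_on :: "'a::{ordered_real_vector,lattice} set \<Rightarrow> 'a topology \<Rightarrow> bool" where
  "locally_solid_on S T \<longleftrightarrow> linear_topology_on S T \<and>
     (\<forall>U. nbhd0 T U \<longrightarrow> (\<exists>V. V \<subseteq> S \<and> (\<forall>x\<in>V. \<forall>y\<in>S. vabs y \<le> vabs x \<longrightarrow> y \<in> V)
                                  \<and> nbhd0 T V \<and> V \<subseteq> U))"

definition solidly_submetrisable_on :: "'a::{ordered_real_vector,lattice} set \<Rightarrow> 'a topology \<Rightarrow> bool" where
  "solidly_submetrisable_on S T \<longleftrightarrow>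
     (\<exists>\<sigma>. locally_solid_on S \<sigma> \<and> metrizable_space \<sigma> \<and> (\<forall>U. openin \<sigma> U \<longrightarrow> openin T U))"

definition locally_solidly_submetrisable :: "'a::{ordered_real_vector,lattice} topology \<Rightarrow> bool" where
  "locally_solidly_submetrisable T \<longleftrightarrow>
     (\<forall>x. solidly_submetrisable_on (band_generated x) (subtopology T (band_generated x)))"

definition normal_seq :: "'a::{ordered_real_vector,lattice} topology \<Rightarrow> (nat \<Rightarrow> 'a set) \<Rightarrow> bool" where
  "normal_seq T V \<longleftrightarrow> (\<forall>n. nbhd0 T (V n) \<and> {a + b | a b. a \<in> V (Suc n) \<and> b \<in> V (Suc n)} \<subseteq> V n)"

definition carrier_top :: "'a::{ordered_real_vector,lattice} topology \<Rightarrow> 'a set" where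
  "carrier_top T = \<Union>{disjoint_complement N | N. \<exists>V. normal_seq T V \<and> (\<forall>n. solid (V n)) \<and> N = (\<Inter>n. V n)}"

end

theory Submission
  imports Defs
begin


context
  fixes dummy :: "'a::{ordered_real_vector,lattice}"
begin

lemma add_inf_l: "(a::'a) + inf b c = inf (a + b) (a + c)"
proof (rule antisym)
  show "a + inf b c \<le> inf (a + b) (a + c)" by (simp add: add_left_mono)
  have "inf (a + b) (a + c) - a \<le> inf b c"
    by (metis inf_le1 inf_le2 le_inf_iff diff_le_eq add.commute)
  then show "inf (a + b) (a + c) \<le> a + inf b c" by (metis diff_le_eq add.commute)
qed

lemma add_sup_l: "(a::'a) + sup b c = sup (a + b) (a + c)"
proof (rule antisym)
  show "sup (a + b) (a + c) \<le> a + sup b c" by (simp add: add_left_mono)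
  have "sup b c \<le> sup (a + b) (a + c) - a"
    by (metis sup_ge1 sup_ge2 sup_least le_diff_eq add.commute)
  then show "a + sup b c \<le> sup (a + b) (a + c)" by (simp add: le_diff_eq add.commute)
qed

lemma neg_sup: "- sup (a::'a) b = inf (-a) (-b)"
proof (rule antisym)
  show "- sup a b \<le> inf (- a) (- b)" by simp
  have "sup a b \<le> - inf (- a) (- b)"
    by (metis inf_le1 inf_le2 sup_least le_minus_iff)
  then show "inf (- a) (- b) \<le> - sup a b" by (simp add: le_minus_iff)
qed

lemma neg_inf: "- inf (a::'a) b = sup (-a) (-b)"
  using neg_sup[of "-a" "-b"] by (metis minus_minus)

lemma inf_plus_sup: "inf (a::'a) b + sup a b = a + b"
proof -
  have "a + b - sup a b = a + b + inf (-a) (-b)" by (simp add: neg_sup)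
  also have "\<dots> = inf (a + b + - a) (a + b + - b)" by (simp add: add_inf_l)
  also have "\<dots> = inf b a" by (simp add: algebra_simps)
  finally show ?thesis by (simp add: algebra_simps inf.commute)
qed

lemma vabs_nonneg: "0 \<le> vabs (x::'a)"
proof -
  have "x + (-x) \<le> vabs x + vabs x" unfolding vabs_def by (rule add_mono) auto
  then have "0 \<le> (2::real) *\<^sub>R vabs x" by (simp add: scaleR_2)
  then show ?thesis by (simp add: scaleR_nonneg_nonneg zero_le_scaleR_iff)
qed

lemma vabs_ge: "x \<le> vabs (x::'a)" "- x \<le> vabs x" unfolding vabs_def by auto

lemma vabs_pos: "0 \<le> (x::'a) \<Longrightarrow> vabs x = x"
  unfolding vabs_def by (simp add: sup.absorb1 order_trans[of "-x" 0 x])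

lemma vabs_vabs: "vabs (vabs (x::'a)) = vabs x" by (simp add: vabs_pos vabs_nonneg)

lemma vabs_minus: "vabs (- (x::'a)) = vabs x" unfolding vabs_def by (simp add: sup.commute)

lemma vabs_zero: "vabs (0::'a) = 0" by (simp add: vabs_pos)

lemma vabs_eq0: "vabs (x::'a) = 0 \<Longrightarrow> x = 0"
  using vabs_ge[of x] by (metis antisym neg_le_0_iff_le)

lemma vabs_triangle: "vabs ((x::'a) + y) \<le> vabs x + vabs y"
  unfolding vabs_def using add_mono[of x "sup x (-x)" y "sup y (-y)"] add_mono[of "-x" "sup x (-x)" "-y" "sup y (-y)"]
  by (simp add: add.commute)

lemma scale_sup: "0 \<le> (c::real) \<Longrightarrow> c *\<^sub>R sup (a::'a) b = sup (c *\<^sub>R a) (c *\<^sub>R b)"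
proof (cases "c = 0")
  case False
  assume c: "0 \<le> c"
  with False have c': "0 < c" by simp
  show ?thesis
  proof (rule antisym)
    have "sup a b \<le> (1/c) *\<^sub>R sup (c *\<^sub>R a) (c *\<^sub>R b)"
    proof (rule sup_least)
      have "a = (1/c) *\<^sub>R (c *\<^sub>R a)" using c' by simp
      also have "\<dots> \<le> (1/c) *\<^sub>R sup (c *\<^sub>R a) (c *\<^sub>R b)" using c' by (intro scaleR_left_mono) auto
      finally show "a \<le> \<dots>" .
      have "b = (1/c) *\<^sub>R (c *\<^sub>R b)" using c' by simp
      also have "\<dots> \<le> (1/c) *\<^sub>R sup (c *\<^sub>R a) (c *\<^sub>R b)" using c' by (intro scaleR_left_mono) auto
      finally show "b \<le> \<dots>" .
    qed
    then have "c *\<^sub>R sup a b \<le> c *\<^sub>R ((1/c) *\<^sub>R sup (c *\<^sub>R a) (c *\<^sub>R b))" using c by (rule scaleR_left_mono)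
    then show "c *\<^sub>R sup a b \<le> sup (c *\<^sub>R a) (c *\<^sub>R b)" using c' by simp
    show "sup (c *\<^sub>R a) (c *\<^sub>R b) \<le> c *\<^sub>R sup a b" using c by (auto intro: scaleR_left_mono)
  qed
qed simp

lemma vabs_scale: "vabs ((c::real) *\<^sub>R (x::'a)) = \<bar>c\<bar> *\<^sub>R vabs x"
proof -
  have P: "vabs (d *\<^sub>R y) = d *\<^sub>R vabs y" if "0 \<le> d" for d and y :: 'a
    unfolding vabs_def using scale_sup[OF that, of y "-y"] by simp
  show ?thesis
  proof (cases "0 \<le> c")
    case True then show ?thesis using P by simp
  next
    case False
    then have "vabs (c *\<^sub>R x) = vabs ((-c) *\<^sub>R (-x))" by simp
    also have "\<dots> = (-c) *\<^sub>R vabs (-x)" using False P[of "-c" "-x"] by simp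
    finally show ?thesis using False by (simp add: vabs_minus)
  qed
qed

lemma inf_add_le: assumes "0 \<le> (a::'a)" "0 \<le> b" "0 \<le> c"
  shows "inf (a + b) c \<le> inf a c + inf b c"
proof -
  have "inf a c + inf b c = inf (inf a c + b) (inf a c + c)"
    using add_inf_l[of "inf a c" b c] by simp
  also have "inf a c + b = inf (a + b) (c + b)" using add_inf_l[of b a c] by (simp add: add.commute)
  also have "inf a c + c = inf (a + c) (c + c)" using add_inf_l[of c a c] by (simp add: add.commute)
  finally have e: "inf a c + inf b c = inf (inf (a + b) (c + b)) (inf (a + c) (c + c))" .
  have "c \<le> c + b" "c \<le> a + c" "c \<le> c + c" using assms by (auto simp: add_increasing add_increasing2)
  then have "inf (a + b) c \<le> inf (inf (a + b) (c + b)) (inf (a + c) (c + c))"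
    by (auto intro: le_infI1 le_infI2 order_trans)
  with e show ?thesis by simp
qed

end


context
  fixes dummy :: "'a::{ordered_real_vector,lattice}"
begin

lemma riesz1: assumes "0 \<le> (u::'a)" "u \<le> a + b" "0 \<le> b"
  shows "u - inf u a \<le> b" "0 \<le> u - inf u a"
proof -
  have "u - inf u a = u + sup (-u) (-a)" by (simp add: neg_inf)
  also have "\<dots> = sup 0 (u - a)" by (simp add: add_sup_l)
  finally have e: "u - inf u a = sup 0 (u - a)" .
  have "u - a \<le> b" using assms by (simp add: diff_le_eq add.commute)
  then show "u - inf u a \<le> b" using e assms by simp
  show "0 \<le> u - inf u a" using e by simp
qed

lemma disj_mono: "0 \<le> (a::'a) \<Longrightarrow> a \<le> b \<Longrightarrow> inf b w = 0 \<Longrightarrow> 0 \<le> w \<Longrightarrow> inf a w = 0"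
  by (metis antisym inf_mono le_inf_iff order_refl)

lemma disj_add: assumes "0 \<le> (a::'a)" "0 \<le> b" "0 \<le> w" "inf a w = 0" "inf b w = 0"
  shows "inf (a + b) w = 0"
  using inf_add_le[OF assms(1-3)] assms by (metis add.right_neutral add_nonneg_nonneg antisym le_inf_iff)

lemma disj_nat: assumes "0 \<le> (a::'a)" "0 \<le> w" "inf a w = 0"
  shows "inf (real k *\<^sub>R a) w = 0"
proof (induction k)
  case 0 then show ?case using assms by (simp add: inf_absorb1)
next
  case (Suc k)
  have "real (Suc k) *\<^sub>R a = a + real k *\<^sub>R a" by (simp add: algebra_simps)
  moreover have "0 \<le> real k *\<^sub>R a" using assms(1) by (simp add: scaleR_nonneg_nonneg)
  ultimately show ?case using disj_add[OF assms(1) _ assms(2,3) Suc] by simp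
qed

lemma disj_scale: assumes "0 \<le> (a::'a)" "0 \<le> w" "inf a w = 0" "0 \<le> t"
  shows "inf (t *\<^sub>R a) w = 0"
proof -
  obtain k :: nat where k: "t \<le> real k" using real_arch_simple by blast
  have "t *\<^sub>R a \<le> real k *\<^sub>R a" using k assms(1) by (rule scaleR_right_mono)
  then show ?thesis using disj_mono[OF _ _ disj_nat[OF assms(1-3), of k] assms(2)] assms
    by (simp add: scaleR_nonneg_nonneg)
qed

lemma dc_iff: "y \<in> disjoint_complement N \<longleftrightarrow> (\<forall>z\<in>N. inf (vabs (y::'a)) (vabs z) = 0)"
  by (simp add: disjoint_complement_def)

lemma dc_band: "band (disjoint_complement (N::'a set))"
proof -
  let ?A = "disjoint_complement N"
  have zero: "0 \<in> ?A" by (simp add: dc_iff vabs_zero inf_absorb1 vabs_nonneg)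
  have add: "y1 + y2 \<in> ?A" if "y1 \<in> ?A" "y2 \<in> ?A" for y1 y2
    unfolding dc_iff
  proof
    fix z assume z: "z \<in> N"
    have "inf (vabs y1 + vabs y2) (vabs z) = 0"
      using that z by (intro disj_add) (auto simp: dc_iff vabs_nonneg)
    then show "inf (vabs (y1 + y2)) (vabs z) = 0"
      by (rule disj_mono[OF vabs_nonneg vabs_triangle _ vabs_nonneg])
  qed
  have sc: "c *\<^sub>R y \<in> ?A" if "y \<in> ?A" for c y
    unfolding dc_iff vabs_scale using that
    by (auto simp: dc_iff vabs_nonneg intro!: disj_scale)
  have so: "solid ?A" unfolding solid_def
    by (auto simp: dc_iff intro: disj_mono[OF vabs_nonneg _ _ vabs_nonneg])
  have supc: "s \<in> ?A" if D: "D \<subseteq> ?A" "is_sup_of D s" for D s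
  proof (cases "D = {}")
    case True
    then have "s \<le> 0" "s \<le> s + s" using D unfolding is_sup_of_def by blast+
    then have "s = 0" by simp
    then show ?thesis using zero by simp
  next
    case False
    then obtain d0 where d0: "d0 \<in> D" by blast
    show ?thesis unfolding dc_iff
    proof
      fix z assume z: "z \<in> N"
      define w where "w = vabs z"
      have w0: "0 \<le> w" unfolding w_def by (rule vabs_nonneg)
      have dw: "inf (vabs d) w = 0" if "d \<in> D" for d using that D z by (auto simp: dc_iff w_def)
      define sp where "sp = sup s 0"
      define sn where "sn = sup (-s) 0"
      have sp0: "0 \<le> sp" and sn0: "0 \<le> sn" unfolding sp_def sn_def by auto
      have "s \<le> sp" unfolding sp_def by simp
      also have "sp \<le> sp + sn" using sn0 by simp
      finally have a1: "s \<le> sp + sn" .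
      have "-s \<le> sn" unfolding sn_def by simp
      also have "sn \<le> sp + sn" using sp0 by simp
      finally have a2: "-s \<le> sp + sn" .
      have vs: "vabs s \<le> sp + sn" unfolding vabs_def using a1 a2 by simp
      have "d0 \<le> s" using D d0 unfolding is_sup_of_def by auto
      then have "sn \<le> sup (-d0) 0" unfolding sn_def by (auto intro: le_supI1)
      also have "\<dots> \<le> vabs d0" using vabs_ge[of d0] vabs_nonneg[of d0] by simp
      finally have snw: "inf sn w = 0" using disj_mono[OF sn0 _ dw[OF d0] w0] by simp
      have bnd: "d \<le> sup sp w - w" if "d \<in> D" for d
      proof -
        define dp where "dp = sup d 0"
        have "dp \<le> vabs d" unfolding dp_def using vabs_ge[of d] vabs_nonneg[of d] by simp
        then have "inf dp w = 0" using disj_mono[OF _ _ dw[OF that] w0] by (simp add: dp_def)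
        then have e: "dp = sup dp w - w" using inf_plus_sup[of dp w] by (simp add: algebra_simps)
        have "d \<le> s" using D that unfolding is_sup_of_def by auto
        then have "dp \<le> sp" unfolding dp_def sp_def by (auto intro: le_supI1)
        then have "sup dp w \<le> sup sp w" by (auto intro: le_supI1)
        then have "dp \<le> sup sp w - w" using e by (metis diff_right_mono)
        then show ?thesis unfolding dp_def by simp
      qed
      then have "s \<le> sup sp w - w" using D unfolding is_sup_of_def by auto
      moreover have "0 \<le> sup sp w - w" by simp
      ultimately have "sp \<le> sup sp w - w" unfolding sp_def by simp
      then have "sp + w \<le> sup sp w" by (simp add: le_diff_eq)
      then have "inf sp w + sup sp w \<le> 0 + sup sp w" using inf_plus_sup[of sp w] by simp
      then have "inf sp w \<le> 0" by (rule add_le_imp_le_right)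
      then have spw: "inf sp w = 0" using sp0 w0 by (simp add: antisym)
      have "inf (sp + sn) w = 0" using disj_add[OF sp0 sn0 w0 spw snw] .
      then show "inf (vabs s) (vabs z) = 0"
        using disj_mono[OF vabs_nonneg vs _ w0] by (simp add: w_def)
    qed
  qed
  show ?thesis unfolding band_def ideal_vl_def using zero add sc so supc by blast
qed

lemma band_UNIV: "band (UNIV::'a set)"
  unfolding band_def ideal_vl_def solid_def by auto

lemma bg_props:
  fixes x :: 'a
  shows "x \<in> band_generated x" "0 \<in> band_generated x"
    "\<And>a b. a \<in> band_generated x \<Longrightarrow> b \<in> band_generated x \<Longrightarrow> a + b \<in> band_generated x"
    "\<And>c a. a \<in> band_generated x \<Longrightarrow> c *\<^sub>R a \<in> band_generated x"
    "\<And>a b. a \<in> band_generated x \<Longrightarrow> vabs b \<le> vabs a \<Longrightarrow> b \<in> band_generated x"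
  unfolding band_generated_def band_def ideal_vl_def solid_def by blast+

lemma bg_sub: "band A \<Longrightarrow> (x::'a) \<in> A \<Longrightarrow> band_generated x \<subseteq> A"
  unfolding band_generated_def by blast

end


definition ssum :: "'a::ab_group_add set \<Rightarrow> 'a set \<Rightarrow> 'a set" where
  "ssum A B = {a + b | a b. a \<in> A \<and> b \<in> B}"

fun Sset :: "(nat \<Rightarrow> 'a::ab_group_add set) \<Rightarrow> nat list \<Rightarrow> 'a set" where
  "Sset V [] = {0}"
| "Sset V (n # ns) = ssum (V n) (Sset V ns)"

definition wt :: "nat list \<Rightarrow> real" where
  "wt ns = sum_list (map (\<lambda>n. (1/2::real) ^ n) ns)"

lemma ssum_lcomm: "ssum A (ssum B C) = ssum B (ssum A C)"
  unfolding ssum_def by (auto, (metis add.left_commute)+)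

lemma ssum_assoc: "ssum A (ssum B C) = ssum (ssum A B) C"
  unfolding ssum_def by (auto, (metis add.assoc)+)

lemma ssum_zero: "ssum {0} A = A" "ssum A {0} = A"
  unfolding ssum_def by auto

lemma ssum_mono: "A \<subseteq> A' \<Longrightarrow> B \<subseteq> B' \<Longrightarrow> ssum A B \<subseteq> ssum A' B'"
  unfolding ssum_def by blast

lemma Sset_append: "Sset V (xs @ ys) = ssum (Sset V xs) (Sset V ys)"
  by (induction xs) (auto simp: ssum_zero ssum_assoc)

lemma Sset_remove: "n \<in> set ns \<Longrightarrow> Sset V ns = ssum (V n) (Sset V (remove1 n ns))"
proof (induction ns)
  case (Cons k ks)
  show ?case
  proof (cases "k = n")
    case False
    then have "n \<in> set ks" using Cons.prems by simp
    then show ?thesis using Cons.IH False by (simp add: ssum_lcomm)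
  qed simp
qed simp

lemma wt_nonneg: "0 \<le> wt ns"
  unfolding wt_def by (induction ns) auto

lemma wt_Cons: "wt (n # ns) = (1/2)^n + wt ns" by (simp add: wt_def)

lemma wt_pos: "ns \<noteq> [] \<Longrightarrow> 0 < wt ns"
  by (cases ns) (auto simp: wt_Cons intro: add_pos_nonneg wt_nonneg)


lemma wt_append: "wt (xs @ ys) = wt xs + wt ys" by (simp add: wt_def)

lemma wt_remove: "n \<in> set ns \<Longrightarrow> wt ns = (1/2)^n + wt (remove1 n ns)"
  unfolding wt_def by (rule sum_list_map_remove1)

lemma wt_div: "\<forall>x\<in>set xs. x \<le> N \<Longrightarrow> \<exists>k::nat. wt xs = real k * (1/2)^N"
proof (induction xs)
  case Nil then show ?case by (auto simp: wt_def)
next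
  case (Cons x xs)
  then obtain k where k: "wt xs = real k * (1/2)^N" by auto
  have xN: "x \<le> N" using Cons.prems by simp
  have "(1/2::real)^x = 2^(N-x) * (1/2)^N"
  proof -
    have "(1/2::real)^N = (1/2)^x * (1/2)^(N-x)" using xN by (simp add: power_add[symmetric])
    then show ?thesis by (simp add: power_one_over)
  qed
  then have "wt (x # xs) = real (2^(N-x) + k) * (1/2)^N" using k by (simp add: wt_Cons algebra_simps)
  then show ?case by blast
qed

lemma half_pow_le_iff: "((1/2::real)^n \<le> (1/2)^m) \<longleftrightarrow> m \<le> n"
  by (simp add: power_decreasing_iff)

lemma half_pow_less_iff: "((1/2::real)^n < (1/2)^m) \<longleftrightarrow> m < n"
  by (simp add: power_strict_decreasing_iff)

context
  fixes V :: "nat \<Rightarrow> 'a::ab_group_add set"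
  assumes V0: "\<And>n. 0 \<in> V n"
    and Vadd: "\<And>n a b. a \<in> V (Suc n) \<Longrightarrow> b \<in> V (Suc n) \<Longrightarrow> a + b \<in> V n"
begin

lemma V_Suc: "V (Suc n) \<subseteq> V n"
  using Vadd[of _ n 0] V0 by force

lemma V_mono: "m \<le> n \<Longrightarrow> V n \<subseteq> V m"
  by (induction n rule: dec_induct) (use V_Suc in auto)

lemma V_ssum: "ssum (V (Suc n)) (V (Suc n)) \<subseteq> V n"
  unfolding ssum_def using Vadd by blast

lemma key: "wt ns \<le> (1/2)^m \<Longrightarrow> Sset V ns \<subseteq> V m"
proof (induction "length ns + sum_list ns" arbitrary: ns rule: less_induct)
  case less
  show ?case
  proof (cases "ns = []")
    case True then show ?thesis using V0 by simp
  next
    case ne: False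
    define n where "n = Max (set ns)"
    have nin: "n \<in> set ns" using ne unfolding n_def by simp
    have nmax: "x \<le> n" if "x \<in> set ns" for x using that unfolding n_def by simp
    define rest where "rest = remove1 n ns"
    have S: "Sset V ns = ssum (V n) (Sset V rest)" using Sset_remove[OF nin] by (simp add: rest_def)
    have W: "wt ns = (1/2)^n + wt rest" using wt_remove[OF nin] by (simp add: rest_def)
    have L: "length ns = Suc (length rest)" using nin by (simp add: rest_def length_remove1)
      (metis One_nat_def Suc_pred length_pos_if_in_set)
    have SL: "sum_list ns = n + sum_list rest" using sum_list_map_remove1[OF nin, of id] by (simp add: rest_def)
    show ?thesis
    proof (cases "rest = []")
      case True
      then have "(1/2::real)^n \<le> (1/2)^m" using W less.prems by (simp add: wt_def)
      then have "m \<le> n" by (simp add: half_pow_le_iff)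
      then show ?thesis using S True V_mono by (simp add: ssum_zero)
    next
      case rne: False
      have "(1/2::real)^n < (1/2)^m" using W less.prems wt_pos[OF rne] by linarith
      then have "m < n" by (simp add: half_pow_less_iff)
      then obtain n' where n': "n = Suc n'" "m \<le> n'" by (cases n) auto
      show ?thesis
      proof (cases "n \<in> set rest")
        case True
        define rest2 where "rest2 = remove1 n rest"
        have S2: "Sset V rest = ssum (V n) (Sset V rest2)" using Sset_remove[OF True] by (simp add: rest2_def)
        have W2: "wt rest = (1/2)^n + wt rest2" using wt_remove[OF True] by (simp add: rest2_def)
        have L2: "length rest = Suc (length rest2)" using True by (simp add: rest2_def length_remove1)
          (metis One_nat_def Suc_pred length_pos_if_in_set)
        have SL2: "sum_list rest = n + sum_list rest2" using sum_list_map_remove1[OF True, of id] by (simp add: rest2_def)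
        have "wt (n' # rest2) = wt ns" using W W2 n'(1) by (simp add: wt_Cons)
        then have "wt (n' # rest2) \<le> (1/2)^m" using less.prems by simp
        moreover have "length (n' # rest2) + sum_list (n' # rest2) < length ns + sum_list ns"
          using L L2 SL SL2 n'(1) by simp
        ultimately have IH: "Sset V (n' # rest2) \<subseteq> V m" using less.hyps by blast
        have "Sset V ns = ssum (ssum (V n) (V n)) (Sset V rest2)" using S S2 by (simp add: ssum_assoc)
        also have "\<dots> \<subseteq> ssum (V n') (Sset V rest2)" using V_ssum n'(1) by (intro ssum_mono) auto
        also have "\<dots> = Sset V (n' # rest2)" by simp
        finally show ?thesis using IH by blast
      next
        case False
        have "\<forall>x\<in>set rest. x \<le> n'"
        proof
          fix x assume x: "x \<in> set rest"
          then have "x \<in> set ns" unfolding rest_def by (meson notin_set_remove1)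
          then have "x \<le> n" by (rule nmax)
          moreover have "x \<noteq> n" using x False by auto
          ultimately show "x \<le> n'" using n'(1) by simp
        qed
        then obtain k where k: "wt rest = real k * (1/2)^n'" using wt_div by blast
        have pm: "(1/2::real)^m = 2^(n'-m) * (1/2)^n'"
        proof -
          have "(1/2::real)^n' = (1/2)^m * (1/2)^(n'-m)" using n'(2) by (simp add: power_add[symmetric])
          then show ?thesis by (simp add: power_one_over)
        qed
        have pn: "(1/2::real)^n = (1/2)^n' / 2" using n'(1) by simp
        have pos: "(0::real) < (1/2)^n'" by simp
        have "real k * (1/2)^n' + (1/2)^n' / 2 \<le> 2^(n'-m) * (1/2::real)^n'"
          using less.prems W k pm pn by simp
        then have "(real k + 1/2) * (1/2)^n' \<le> 2^(n'-m) * (1/2::real)^n'" by (simp add: algebra_simps)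
        then have "real k + 1/2 \<le> 2^(n'-m)" using pos by (simp add: mult_le_cancel_right)
        then have "real k < 2^(n'-m)" by linarith
        then have "k < 2^(n'-m)" by (metis of_nat_less_iff of_nat_numeral of_nat_power)
        then have "Suc k \<le> 2^(n'-m)" by simp
        then have "real (Suc k) \<le> 2^(n'-m)" by (metis of_nat_le_iff of_nat_numeral of_nat_power)
        then have "real k + 1 \<le> 2^(n'-m)" by simp
        then have "(real k + 1) * (1/2)^n' \<le> 2^(n'-m) * (1/2::real)^n'" using pos by (simp add: mult_le_cancel_right)
        then have "wt (n' # rest) \<le> (1/2)^m" using k pm by (simp add: wt_Cons algebra_simps)
        moreover have "length (n' # rest) + sum_list (n' # rest) < length ns + sum_list ns"
          using L SL n'(1) by simp
        ultimately have IH: "Sset V (n' # rest) \<subseteq> V m" using less.hyps by blast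
        have "Sset V ns \<subseteq> ssum (V n') (Sset V rest)" unfolding S n'(1) by (intro ssum_mono V_Suc) auto
        then show ?thesis using IH by simp
      qed
    qed
  qed
qed

end


definition Wset :: "(nat \<Rightarrow> 'a::{ordered_real_vector,lattice} set) \<Rightarrow> 'a \<Rightarrow> real set" where
  "Wset V y = {wt ns | ns. \<exists>v\<in>Sset V ns. vabs y \<le> v}"

definition pn :: "(nat \<Rightarrow> 'a::{ordered_real_vector,lattice} set) \<Rightarrow> 'a \<Rightarrow> real" where
  "pn V y = Inf (insert 1 (Wset V y))"

lemma half_pow_small: "0 < (e::real) \<Longrightarrow> \<exists>n. (1/2::real)^n < e"
  by (rule real_arch_pow_inv) auto

locale nseq =
  fixes V :: "nat \<Rightarrow> 'a::{ordered_real_vector,lattice} set"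
  assumes V0: "\<And>n. 0 \<in> V n"
    and Vadd: "\<And>n a b. a \<in> V (Suc n) \<Longrightarrow> b \<in> V (Suc n) \<Longrightarrow> a + b \<in> V n"
    and Vsol: "\<And>n. solid (V n)"
begin

lemma I_nonneg: "a \<in> insert 1 (Wset V y) \<Longrightarrow> 0 \<le> a"
  unfolding Wset_def using wt_nonneg by auto

lemma I_bdd: "bdd_below (insert 1 (Wset V y))"
  using I_nonneg by (meson bdd_belowI)

lemma pn_nonneg: "0 \<le> pn V y"
  unfolding pn_def by (rule cInf_greatest) (auto intro: I_nonneg)

lemma pn_le1: "pn V y \<le> 1"
  unfolding pn_def by (rule cInf_lower[OF _ I_bdd]) simp

lemma pn_lower: "a \<in> Wset V y \<Longrightarrow> pn V y \<le> a"
  unfolding pn_def by (rule cInf_lower[OF _ I_bdd]) simp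

lemma pn_V: "y \<in> V n \<Longrightarrow> pn V y \<le> (1/2)^n"
proof -
  assume y: "y \<in> V n"
  have "vabs y \<in> V n" using Vsol[of n] y unfolding solid_def by (auto simp: vabs_vabs)
  then have "vabs y \<in> Sset V [n]" by (force simp: ssum_def)
  then have "wt [n] \<in> Wset V y" unfolding Wset_def by blast
  then show ?thesis using pn_lower by (simp add: wt_def)
qed

lemma pn_small: "pn V y < (1/2)^m \<Longrightarrow> y \<in> V m"
proof -
  assume "pn V y < (1/2)^m"
  then have "Inf (insert 1 (Wset V y)) < (1/2)^m" by (simp add: pn_def)
  from cInf_lessD[OF _ this] obtain a where a: "a \<in> insert 1 (Wset V y)" "a < (1/2)^m"
    by blast
  have "(1/2::real)^m \<le> 1" by (simp add: power_le_one)
  then have "a \<in> Wset V y" using a by auto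
  then obtain ns v where ns: "a = wt ns" "v \<in> Sset V ns" "vabs y \<le> v" unfolding Wset_def by blast
  have "v \<in> V m" using key[where V=V, OF V0 Vadd, where ns=ns and m=m] ns a by auto
  moreover have "vabs y \<le> vabs v" using ns(3) vabs_ge(1)[of v] by (rule order_trans)
  ultimately show "y \<in> V m" using Vsol[of m] unfolding solid_def by blast
qed

lemma pn_eq0: "pn V y = 0 \<Longrightarrow> y \<in> V m"
  by (rule pn_small) simp

lemma pn_mono: "vabs y \<le> vabs z \<Longrightarrow> pn V y \<le> pn V z"
  unfolding pn_def
proof (rule cInf_superset_mono[OF _ I_bdd])
  assume "vabs y \<le> vabs z"
  then show "insert 1 (Wset V z) \<subseteq> insert 1 (Wset V y)"
    unfolding Wset_def by (blast intro: order_trans[OF \<open>vabs y \<le> vabs z\<close>])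
qed simp

lemma pn_minus: "pn V (- y) = pn V y"
  unfolding pn_def Wset_def by (simp add: vabs_minus)

lemma pn_triangle: "pn V (y + z) \<le> pn V y + pn V z"
proof -
  have main: "pn V (y + z) \<le> a + b" if a: "a \<in> insert 1 (Wset V y)" and b: "b \<in> insert 1 (Wset V z)" for a b
  proof (cases "a = 1 \<or> b = 1")
    case True
    then show ?thesis using pn_le1[of "y+z"] I_nonneg[OF a] I_nonneg[OF b] by auto
  next
    case False
    then have "a \<in> Wset V y" "b \<in> Wset V z" using a b by auto
    then obtain ns1 v1 ns2 v2 where h: "a = wt ns1" "v1 \<in> Sset V ns1" "vabs y \<le> v1"
      "b = wt ns2" "v2 \<in> Sset V ns2" "vabs z \<le> v2" unfolding Wset_def by blast
    have "v1 + v2 \<in> Sset V (ns1 @ ns2)" using h by (auto simp: Sset_append ssum_def)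
    moreover have "vabs (y + z) \<le> v1 + v2"
      using vabs_triangle[of y z] add_mono[OF h(3) h(6)] by (rule order_trans)
    moreover have "a + b = wt (ns1 @ ns2)" by (simp add: h wt_append)
    ultimately have "a + b \<in> Wset V (y + z)" unfolding Wset_def by blast
    then show ?thesis by (rule pn_lower)
  qed
  have B: "pn V (y + z) - b \<le> pn V y" if b: "b \<in> insert 1 (Wset V z)" for b
  proof -
    have "pn V (y + z) - b \<le> Inf (insert 1 (Wset V y))"
    proof (rule cInf_greatest)
      fix a assume "a \<in> insert 1 (Wset V y)"
      from main[OF this b] show "pn V (y + z) - b \<le> a" by linarith
    qed simp
    then show ?thesis by (simp add: pn_def)
  qed
  have "pn V (y + z) - pn V y \<le> Inf (insert 1 (Wset V z))"
  proof (rule cInf_greatest)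
    fix b assume "b \<in> insert 1 (Wset V z)"
    from B[OF this] show "pn V (y + z) - pn V y \<le> b" by linarith
  qed simp
  then have "pn V (y + z) - pn V y \<le> pn V z" by (simp add: pn_def)
  then show ?thesis by simp
qed

lemma pn_zero: "pn V 0 = 0"
proof (rule ccontr)
  assume "pn V 0 \<noteq> 0"
  then have "0 < pn V 0" using pn_nonneg[of 0] by simp
  then obtain n where "(1/2::real)^n < pn V 0" using half_pow_small by blast
  then show False using pn_V[OF V0[of n]] by simp
qed

lemma pn_nat: "pn V (real k *\<^sub>R y) \<le> real k * pn V y"
proof (induction k)
  case 0 then show ?case by (simp add: pn_zero)
next
  case (Suc k)
  have "pn V (real (Suc k) *\<^sub>R y) = pn V (y + real k *\<^sub>R y)" by (simp add: algebra_simps)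
  also have "\<dots> \<le> pn V y + pn V (real k *\<^sub>R y)" by (rule pn_triangle)
  also have "\<dots> \<le> real (Suc k) * pn V y" using Suc by (simp add: algebra_simps)
  finally show ?case .
qed

lemma pn_scale_le: "\<bar>c\<bar> \<le> real k \<Longrightarrow> pn V (c *\<^sub>R y) \<le> real k * pn V y"
proof -
  assume c: "\<bar>c\<bar> \<le> real k"
  have "vabs (c *\<^sub>R y) \<le> vabs (real k *\<^sub>R y)"
    unfolding vabs_scale using c vabs_nonneg[of y] by (simp add: scaleR_right_mono)
  then have "pn V (c *\<^sub>R y) \<le> pn V (real k *\<^sub>R y)" by (rule pn_mono)
  also have "\<dots> \<le> real k * pn V y" by (rule pn_nat)
  finally show ?thesis .
qed

end


lemma tau_tr:
  assumes ls: "locally_solid_on UNIV (\<tau>::'a::{ordered_real_vector,lattice} topology)"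
  shows "continuous_map \<tau> \<tau> (\<lambda>z. z + c)"
proof -
  have top: "topspace \<tau> = UNIV" and add: "continuous_map (prod_topology \<tau> \<tau>) \<tau> (\<lambda>(a, b). a + b)"
    using ls unfolding locally_solid_on_def linear_topology_on_def by auto
  have "continuous_map \<tau> (prod_topology \<tau> \<tau>) (\<lambda>z. (z, c))"
    by (intro continuous_map_pairedI continuous_map_id[unfolded id_def]) (simp add: top)
  from continuous_map_compose[OF this add] show ?thesis by (simp add: o_def)
qed

lemma tau_open_tr:
  assumes ls: "locally_solid_on UNIV (\<tau>::'a::{ordered_real_vector,lattice} topology)"
    and G: "openin \<tau> G"
  shows "openin \<tau> {z. z - a \<in> G}"
proof -
  have top: "topspace \<tau> = UNIV"
    using ls unfolding locally_solid_on_def linear_topology_on_def by auto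
  from openin_continuous_map_preimage[OF tau_tr[OF ls, of "-a"] G] show ?thesis by (simp add: top)
qed

lemma tau_absorb:
  assumes ls: "locally_solid_on UNIV (\<tau>::'a::{ordered_real_vector,lattice} topology)"
    and G: "nbhd0 \<tau> G"
  shows "\<exists>t>0. t *\<^sub>R y \<in> G"
proof -
  have top: "topspace \<tau> = UNIV" and mul: "continuous_map (prod_topology euclideanreal \<tau>) \<tau> (\<lambda>(c, a). c *\<^sub>R a)"
    using ls unfolding locally_solid_on_def linear_topology_on_def by auto
  have "continuous_map euclideanreal (prod_topology euclideanreal \<tau>) (\<lambda>c. (c, y))"
    by (intro continuous_map_pairedI continuous_map_id[unfolded id_def]) (simp add: top)
  from continuous_map_compose[OF this mul] have cm: "continuous_map euclideanreal \<tau> (\<lambda>c. c *\<^sub>R y)"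
    by (simp add: o_def)
  obtain Op where Op: "openin \<tau> Op" "0 \<in> Op" "Op \<subseteq> G" using G unfolding nbhd0_def by blast
  have "openin euclideanreal {c \<in> topspace euclideanreal. c *\<^sub>R y \<in> Op}"
    by (rule openin_continuous_map_preimage[OF cm Op(1)])
  then have op: "open {c. c *\<^sub>R y \<in> Op}" by simp
  have "(0::real) \<in> {c. c *\<^sub>R y \<in> Op}" using Op by simp
  then obtain e where e: "e > 0" "\<And>x'. dist x' 0 < e \<Longrightarrow> x' \<in> {c. c *\<^sub>R y \<in> Op}"
    using op unfolding open_dist by blast
  have "dist (e/2) 0 < e" using e by simp
  then have "(e/2) *\<^sub>R y \<in> Op" using e(2) by blast
  then show ?thesis using e Op by (intro exI[of _ "e/2"]) auto
qed

lemma submetr: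
  fixes \<tau> :: "'a::{ordered_real_vector,lattice} topology" and V :: "nat \<Rightarrow> 'a set" and B :: "'a set"
  assumes ls: "locally_solid_on UNIV \<tau>" and nV: "normal_seq \<tau> V" and sV: "\<And>n. solid (V n)"
    and B0: "0 \<in> B" and Badd: "\<And>a b. a \<in> B \<Longrightarrow> b \<in> B \<Longrightarrow> a + b \<in> B"
    and Bsc: "\<And>c a. a \<in> B \<Longrightarrow> c *\<^sub>R a \<in> B"
    and Bsol: "\<And>a b. a \<in> B \<Longrightarrow> vabs b \<le> vabs a \<Longrightarrow> b \<in> B"
    and sep: "\<And>y. y \<in> B \<Longrightarrow> (\<forall>n. y \<in> V n) \<Longrightarrow> y = 0"
  shows "solidly_submetrisable_on B (subtopology \<tau> B)"
proof -
  have V0: "\<And>n. 0 \<in> V n" using nV unfolding normal_seq_def nbhd0_def by blast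
  have Vadd: "\<And>n a b. a \<in> V (Suc n) \<Longrightarrow> b \<in> V (Suc n) \<Longrightarrow> a + b \<in> V n"
    using nV unfolding normal_seq_def by blast
  have Vnb: "\<And>n. nbhd0 \<tau> (V n)" using nV unfolding normal_seq_def by blast
  have top: "topspace \<tau> = UNIV"
    using ls unfolding locally_solid_on_def linear_topology_on_def by auto
  have Bminus: "a - b \<in> B" if "a \<in> B" "b \<in> B" for a b
    using Badd[OF that(1) Bsc[OF that(2), of "-1"]] by simp
  interpret P: nseq V by (rule nseq.intro) (use V0 Vadd sV in auto)
  note pnn = P.pn_nonneg
  note pnt = P.pn_triangle
  note pnm = P.pn_minus
  note pn0 = P.pn_zero
  note pne = P.pn_eq0
  note pnV = P.pn_V
  note pnmono = P.pn_mono
  note pnnat = P.pn_nat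
  define d where "d = (\<lambda>a b. pn V (a - b))"
  have dcomm: "d x y = d y x" for x y
    unfolding d_def using pnm[of "y - x"] by simp
  interpret M: Metric_space B d
  proof
    show "0 \<le> d x y" for x y unfolding d_def by (rule pnn)
    show "d x y = d y x" for x y by (rule dcomm)
    show "d x y = 0 \<longleftrightarrow> x = y" if "x \<in> B" "y \<in> B" for x y
    proof
      assume "d x y = 0"
      then have "\<forall>n. x - y \<in> V n" unfolding d_def using pne by blast
      then have "x - y = 0" using sep Bminus[OF that] by blast
      then show "x = y" by simp
    qed (simp add: d_def pn0)
    show "d x z \<le> d x y + d y z" for x y z
      unfolding d_def using pnt[of "x - y" "y - z"] by simp
  qed
  have ls_sigma: "locally_solid_on B M.mtopology"
    unfolding locally_solid_on_def linear_topology_on_def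
  proof (intro conjI allI impI)
    show "topspace M.mtopology = B" by simp
    show "Hausdorff_space M.mtopology" by (rule M.Hausdorff_space_mtopology)
    interpret M2: Metric_space12 B d B d
      by (simp add: Metric_space12_def M.Metric_space_axioms)
    have "continuous_map M2.Prod_metric.mtopology M.mtopology (\<lambda>(a, b). a + b)"
      unfolding M2.Prod_metric.metric_continuous_map[OF M.Metric_space_axioms]
    proof (intro conjI ballI allI impI)
      show "(\<lambda>(a, b). a + b) ` (B \<times> B) \<subseteq> B" using Badd by auto
      fix a :: "'a \<times> 'a" and \<epsilon> :: real assume a: "a \<in> B \<times> B" and e: "\<epsilon> > 0"
      show "\<exists>\<delta>>0. \<forall>x. x \<in> B \<times> B \<and> prod_dist d d a x < \<delta> \<longrightarrow> d ((\<lambda>(a, b). a + b) a) ((\<lambda>(a, b). a + b) x) < \<epsilon>"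
      proof (intro exI[of _ "\<epsilon>/2"] conjI allI impI)
        fix x :: "'a \<times> 'a" assume x: "x \<in> B \<times> B \<and> prod_dist d d a x < \<epsilon>/2"
        obtain a1 a2 x1 x2 where ax: "a = (a1, a2)" "x = (x1, x2)" by (cases a, cases x) auto
        have c1: "d a1 x1 < \<epsilon>/2" "d a2 x2 < \<epsilon>/2"
          using x M2.component_le_prod_metric(1)[of a1 x1 a2 x2] M2.component_le_prod_metric(2)[of a2 x2 a1 x1] unfolding ax by auto
        have "d (a1 + a2) (x1 + x2) = pn V ((a1 - x1) + (a2 - x2))" by (simp add: d_def algebra_simps)
        also have "\<dots> \<le> d a1 x1 + d a2 x2" unfolding d_def by (rule pnt)
        finally show "d ((\<lambda>(a, b). a + b) a) ((\<lambda>(a, b). a + b) x) < \<epsilon>" using c1 ax by simp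
      qed (use e in simp)
    qed
    then show "continuous_map (prod_topology M.mtopology M.mtopology) M.mtopology (\<lambda>(a, b). a + b)"
      by (simp add: M2.mtopology_prod_metric)
    interpret M3: Metric_space12 UNIV dist B d
      by (simp add: Metric_space12_def M.Metric_space_axioms Met_TC.Metric_space_axioms)
    have "continuous_map M3.Prod_metric.mtopology M.mtopology (\<lambda>(c, a). c *\<^sub>R a)"
      unfolding M3.Prod_metric.metric_continuous_map[OF M.Metric_space_axioms]
    proof (intro conjI ballI allI impI)
      show "(\<lambda>(c, a). c *\<^sub>R a) ` (UNIV \<times> B) \<subseteq> B" using Bsc by auto
      fix p :: "real \<times> 'a" and \<epsilon> :: real assume p: "p \<in> UNIV \<times> B" and e: "\<epsilon> > 0"
      obtain c0 a where pa: "p = (c0, a)" by (cases p) auto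
      have aB: "a \<in> B" using p pa by auto
      obtain m where m: "(1/2::real)^m < \<epsilon>/2" using half_pow_small[of "\<epsilon>/2"] e by auto
      obtain t where t: "t > 0" "t *\<^sub>R a \<in> V m" using tau_absorb[OF ls Vnb[of m]] by blast
      obtain K :: nat where K: "\<bar>c0\<bar> + 1 \<le> real K" using real_arch_simple by blast
      define \<delta> where "\<delta> = min 1 (min t (\<epsilon> / (2 * (real K + 1))))"
      have dpos: "\<delta> > 0" unfolding \<delta>_def using t e by simp
      show "\<exists>\<delta>>0. \<forall>x. x \<in> UNIV \<times> B \<and> prod_dist dist d p x < \<delta> \<longrightarrow>
              d ((\<lambda>(c, a). c *\<^sub>R a) p) ((\<lambda>(c, a). c *\<^sub>R a) x) < \<epsilon>"
      proof (intro exI[of _ \<delta>] conjI allI impI)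
        fix q :: "real \<times> 'a" assume q: "q \<in> UNIV \<times> B \<and> prod_dist dist d p q < \<delta>"
        obtain c x where qc: "q = (c, x)" by (cases q) auto
        have c1: "dist c0 c < \<delta>" "d a x < \<delta>"
          using q M3.component_le_prod_metric(1)[of c0 c a x] M3.component_le_prod_metric(2)[of a x c0 c] unfolding pa qc by auto
        have cK: "\<bar>c\<bar> \<le> real K" using c1(1) K unfolding \<delta>_def dist_real_def by linarith
        have ct: "\<bar>c0 - c\<bar> \<le> t" using c1(1) unfolding \<delta>_def dist_real_def by linarith
        have e1: "c0 *\<^sub>R a - c *\<^sub>R x = c *\<^sub>R (a - x) + (c0 - c) *\<^sub>R a" by (simp add: algebra_simps)
        have "d (c0 *\<^sub>R a) (c *\<^sub>R x) \<le> pn V (c *\<^sub>R (a - x)) + pn V ((c0 - c) *\<^sub>R a)"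
          unfolding d_def e1 by (rule pnt)
        moreover have "pn V (c *\<^sub>R (a - x)) < \<epsilon>/2"
        proof -
          have "vabs (c *\<^sub>R (a - x)) \<le> vabs (real K *\<^sub>R (a - x))"
            unfolding vabs_scale using cK vabs_nonneg[of "a - x"] by (simp add: scaleR_right_mono)
          then have "pn V (c *\<^sub>R (a - x)) \<le> pn V (real K *\<^sub>R (a - x))" by (rule pnmono)
          also have "\<dots> \<le> real K * d a x" unfolding d_def by (rule pnnat)
          finally have "pn V (c *\<^sub>R (a - x)) \<le> real K * d a x" .
          also have "\<dots> \<le> real K * (\<epsilon> / (2 * (real K + 1)))"
            using c1(2) unfolding \<delta>_def by (intro mult_left_mono) auto
          also have "\<dots> < \<epsilon>/2" using e by (simp add: field_simps)
          finally show ?thesis .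
        qed
        moreover have "pn V ((c0 - c) *\<^sub>R a) < \<epsilon>/2"
        proof -
          have "vabs ((c0 - c) *\<^sub>R a) \<le> vabs (t *\<^sub>R a)"
            unfolding vabs_scale using ct t vabs_nonneg[of a] by (simp add: scaleR_right_mono)
          then have "pn V ((c0 - c) *\<^sub>R a) \<le> pn V (t *\<^sub>R a)" by (rule pnmono)
          also have "\<dots> \<le> (1/2)^m" by (rule pnV[OF t(2)])
          finally show ?thesis using m by simp
        qed
        ultimately show "d ((\<lambda>(c, a). c *\<^sub>R a) p) ((\<lambda>(c, a). c *\<^sub>R a) q) < \<epsilon>"
          unfolding pa qc by simp
      qed (rule dpos)
    qed
    then show "continuous_map (prod_topology euclideanreal M.mtopology) M.mtopology (\<lambda>(c, a). c *\<^sub>R a)"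
      by (simp add: M3.mtopology_prod_metric)
  next
    fix U assume U: "nbhd0 M.mtopology U"
    then obtain W where W: "openin M.mtopology W" "0 \<in> W" "W \<subseteq> U" unfolding nbhd0_def by blast
    then obtain r where r: "r > 0" "M.mball 0 r \<subseteq> W" unfolding M.openin_mtopology by blast
    show "\<exists>V. V \<subseteq> B \<and> (\<forall>x\<in>V. \<forall>y\<in>B. vabs y \<le> vabs x \<longrightarrow> y \<in> V) \<and> nbhd0 M.mtopology V \<and> V \<subseteq> U"
    proof (intro exI[of _ "M.mball 0 r"] conjI ballI impI)
      show "M.mball 0 r \<subseteq> B" by (rule M.mball_subset_mspace)
      show "M.mball 0 r \<subseteq> U" using r W by blast
      show "nbhd0 M.mtopology (M.mball 0 r)" unfolding nbhd0_def using r B0 by blast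
      fix x y assume x: "x \<in> M.mball 0 r" and y: "y \<in> B" and xy: "vabs y \<le> vabs x"
      have "d 0 y = pn V y" unfolding d_def using pnm[of y] by simp
      also have "\<dots> \<le> pn V x" by (rule pnmono[OF xy])
      also have "\<dots> = d 0 x" unfolding d_def using pnm[of x] by simp
      finally show "y \<in> M.mball 0 r" using x y B0 by auto
    qed
  qed
  have coarse: "openin (subtopology \<tau> B) U" if U: "openin M.mtopology U" for U
  proof -
    have UB: "U \<subseteq> B" using U M.openin_mtopology by blast
    show ?thesis unfolding openin_subopen[of _ U]
    proof
      fix a assume a: "a \<in> U"
      obtain r where r: "r > 0" "M.mball a r \<subseteq> U" using U a unfolding M.openin_mtopology by blast
      obtain m where m: "(1/2::real)^m < r" using half_pow_small r(1) by blast
      obtain G where G: "openin \<tau> G" "0 \<in> G" "G \<subseteq> V m" using Vnb[of m] unfolding nbhd0_def by blast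
      define T where "T = {z. z - a \<in> G}"
      have T: "openin \<tau> T" unfolding T_def by (rule tau_open_tr[OF ls G(1)])
      have "T \<inter> B \<subseteq> M.mball a r"
      proof
        fix z assume z: "z \<in> T \<inter> B"
        then have "z - a \<in> V m" using G unfolding T_def by blast
        then have "pn V (z - a) \<le> (1/2)^m" by (rule pnV)
        moreover have "d a z = pn V (z - a)" unfolding d_def using pnm[of "z - a"] by simp
        ultimately show "z \<in> M.mball a r" using z a UB m by auto
      qed
      moreover have "openin (subtopology \<tau> B) (T \<inter> B)" unfolding openin_subtopology using T by blast
      moreover have "a \<in> T \<inter> B" using a UB G unfolding T_def by auto
      ultimately show "\<exists>T'. openin (subtopology \<tau> B) T' \<and> a \<in> T' \<and> T' \<subseteq> U" using r by blast
    qed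
  qed
  show ?thesis unfolding solidly_submetrisable_on_def
    using ls_sigma M.metrizable_space_mtopology coarse by blast
qed



lemma nbhd0_mono: "nbhd0 T A \<Longrightarrow> A \<subseteq> A' \<Longrightarrow> nbhd0 T A'"
  unfolding nbhd0_def by blast

lemma nbhd0_Int: "nbhd0 T A \<Longrightarrow> nbhd0 T A' \<Longrightarrow> nbhd0 T (A \<inter> A')"
  unfolding nbhd0_def by (meson IntI Int_mono openin_Int)

lemma carrier_from:
  fixes \<tau> :: "'a::{ordered_real_vector,lattice} topology" and x :: 'a
  assumes ls: "locally_solid_on UNIV \<tau>"
    and sm: "solidly_submetrisable_on (band_generated x) (subtopology \<tau> (band_generated x))"
  shows "x \<in> carrier_top \<tau>"
proof -
  define B where "B = band_generated x"
  have xB: "x \<in> B" and B0: "0 \<in> B" and Bsol: "\<And>a b. a \<in> B \<Longrightarrow> vabs b \<le> vabs a \<Longrightarrow> b \<in> B"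
    unfolding B_def using bg_props by blast+
  obtain \<sigma> where \<sigma>: "locally_solid_on B \<sigma>" "metrizable_space \<sigma>"
    "\<And>U. openin \<sigma> U \<Longrightarrow> openin (subtopology \<tau> B) U"
    using sm unfolding solidly_submetrisable_on_def B_def by blast
  obtain M d where Md: "Metric_space M d" "\<sigma> = Metric_space.mtopology M d"
    using \<sigma>(2) unfolding metrizable_space_def by blast
  interpret M: Metric_space M d by (rule Md(1))
  have topB: "topspace \<sigma> = B" and addc: "continuous_map (prod_topology \<sigma> \<sigma>) \<sigma> (\<lambda>(a, b). a + b)"
    and lsb: "\<And>U. nbhd0 \<sigma> U \<Longrightarrow> \<exists>V. V \<subseteq> B \<and> (\<forall>x\<in>V. \<forall>y\<in>B. vabs y \<le> vabs x \<longrightarrow> y \<in> V) \<and> nbhd0 \<sigma> V \<and> V \<subseteq> U"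
    using \<sigma>(1) unfolding locally_solid_on_def linear_topology_on_def by auto
  have MB: "M = B" using topB Md(2) by simp
  define Pr where "Pr = (\<lambda>W U. W \<subseteq> B \<and> (\<forall>x\<in>W. \<forall>y\<in>B. vabs y \<le> vabs x \<longrightarrow> y \<in> W) \<and> nbhd0 \<sigma> W \<and> W \<subseteq> U
       \<and> (\<forall>a\<in>W. \<forall>b\<in>W. a + b \<in> U))"
  have half: "\<exists>W. Pr W U" if U: "nbhd0 \<sigma> U" for U
  proof -
    obtain G where G: "openin \<sigma> G" "0 \<in> G" "G \<subseteq> U" using U unfolding nbhd0_def by blast
    define S where "S = {p \<in> topspace (prod_topology \<sigma> \<sigma>). (\<lambda>(a, b). a + b) p \<in> G}"
    have opS: "openin (prod_topology \<sigma> \<sigma>) S"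
      unfolding S_def by (rule openin_continuous_map_preimage[OF addc G(1)])
    have inS: "(0, 0) \<in> S" unfolding S_def using G B0 topB by simp
    from openin_prod_topology_alt[THEN iffD1, OF opS, rule_format, OF inS]
    obtain U1 U2 where U12: "openin \<sigma> U1" "openin \<sigma> U2" "0 \<in> U1" "0 \<in> U2" "U1 \<times> U2 \<subseteq> S"
      by blast
    have nb12: "nbhd0 \<sigma> (U1 \<inter> U2)" unfolding nbhd0_def
      by (rule exI[of _ "U1 \<inter> U2"]) (use U12 in \<open>simp add: openin_Int\<close>)
    obtain W where W: "W \<subseteq> B" "\<forall>x\<in>W. \<forall>y\<in>B. vabs y \<le> vabs x \<longrightarrow> y \<in> W" "nbhd0 \<sigma> W" "W \<subseteq> U1 \<inter> U2"
      using lsb[OF nb12] by (elim exE conjE)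
    have sumW: "a + b \<in> U" if "a \<in> W" "b \<in> W" for a b
    proof -
      have "(a, b) \<in> U1 \<times> U2" using that W(4) by auto
      then have "(a, b) \<in> S" using U12(5) by blast
      then show ?thesis using G(3) unfolding S_def by auto
    qed
    have "0 \<in> W" using W(3) unfolding nbhd0_def by blast
    then have "W \<subseteq> U" using sumW by (metis add.right_neutral subsetI)
    have "\<forall>a\<in>W. \<forall>b\<in>W. a + b \<in> U" using sumW by blast
    then show ?thesis unfolding Pr_def using W(1,2,3) \<open>W \<subseteq> U\<close> by (intro exI[of _ W] conjI)
  qed
  have "\<forall>U. \<exists>W. nbhd0 \<sigma> U \<longrightarrow> Pr W U" using half by blast
  from choice[OF this] obtain f where f0: "\<forall>U. nbhd0 \<sigma> U \<longrightarrow> Pr (f U) U" by (elim exE)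
  have f: "\<And>U. nbhd0 \<sigma> U \<Longrightarrow> Pr (f U) U" using f0 by blast
  have ballnb: "nbhd0 \<sigma> (M.mball 0 r)" if "r > 0" for r
  proof -
    have M0: "0 \<in> M" using B0 MB by simp
    show ?thesis unfolding nbhd0_def Md(2) using that M0 by (intro exI[of _ "M.mball 0 r"]) auto
  qed
  define Ws where "Ws = rec_nat (f (M.mball 0 1)) (\<lambda>n W. f (W \<inter> M.mball 0 (1 / (real n + 2))))"
  have Ws0: "Ws 0 = f (M.mball 0 1)" and WsS: "\<And>n. Ws (Suc n) = f (Ws n \<inter> M.mball 0 (1 / (real n + 2)))"
    unfolding Ws_def by simp_all
  have inv: "nbhd0 \<sigma> (Ws n) \<and> Ws n \<subseteq> B \<and> (\<forall>x\<in>Ws n. \<forall>y\<in>B. vabs y \<le> vabs x \<longrightarrow> y \<in> Ws n)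
      \<and> Ws n \<subseteq> M.mball 0 (1 / (real n + 1))" for n
  proof (induction n)
    case 0
    have "Pr (Ws 0) (M.mball 0 1)" unfolding Ws0 by (rule f[OF ballnb]) simp
    then show ?case unfolding Pr_def by simp
  next
    case (Suc n)
    have "nbhd0 \<sigma> (Ws n \<inter> M.mball 0 (1 / (real n + 2)))"
      using Suc.IH ballnb by (intro nbhd0_Int) auto
    then have "Pr (Ws (Suc n)) (Ws n \<inter> M.mball 0 (1 / (real n + 2)))" unfolding WsS by (rule f)
    then show ?case unfolding Pr_def by (auto simp: add.commute)
  qed
  have Wsum: "a + b \<in> Ws n" if "a \<in> Ws (Suc n)" "b \<in> Ws (Suc n)" for a b n
  proof -
    have "nbhd0 \<sigma> (Ws n \<inter> M.mball 0 (1 / (real n + 2)))"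
      using inv ballnb by (intro nbhd0_Int) auto
    then have "Pr (Ws (Suc n)) (Ws n \<inter> M.mball 0 (1 / (real n + 2)))" unfolding WsS by (rule f)
    then show ?thesis using that unfolding Pr_def by blast
  qed
  define Vs where "Vs = (\<lambda>n. {y. \<forall>u\<in>B. 0 \<le> u \<and> u \<le> vabs y \<longrightarrow> u \<in> Ws n})"
  have Vsol: "solid (Vs n)" for n
    unfolding solid_def
  proof (intro ballI allI impI)
    fix y w assume y: "y \<in> Vs n" and wy: "vabs w \<le> vabs y"
    show "w \<in> Vs n" unfolding Vs_def
    proof (intro CollectI ballI impI)
      fix u assume u: "u \<in> B" "0 \<le> u \<and> u \<le> vabs w"
      have "u \<le> vabs y" using order_trans[OF conjunct2[OF u(2)] wy] .
      then show "u \<in> Ws n" using y u unfolding Vs_def by blast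
    qed
  qed
  have Vnb: "nbhd0 \<tau> (Vs n)" for n
  proof -
    obtain Op where Op: "openin \<sigma> Op" "0 \<in> Op" "Op \<subseteq> Ws n" using inv[of n] unfolding nbhd0_def by blast
    obtain T where T: "openin \<tau> T" "Op = T \<inter> B" using \<sigma>(3)[OF Op(1)] unfolding openin_subtopology by blast
    have "nbhd0 \<tau> T" unfolding nbhd0_def using T Op by blast
    then obtain V' where V': "\<forall>x\<in>V'. \<forall>y\<in>UNIV. vabs y \<le> vabs x \<longrightarrow> y \<in> V'" "nbhd0 \<tau> V'" "V' \<subseteq> T"
      using ls unfolding locally_solid_on_def by blast
    have "V' \<subseteq> Vs n"
    proof
      fix y assume y: "y \<in> V'"
      show "y \<in> Vs n" unfolding Vs_def
      proof (intro CollectI ballI impI)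
        fix u assume u: "u \<in> B" "0 \<le> u \<and> u \<le> vabs y"
        then have "vabs u \<le> vabs y" by (simp add: vabs_pos)
        then have "u \<in> V'" using V'(1) y by blast
        then show "u \<in> Ws n" using V'(3) T(2) Op(3) u(1) by blast
      qed
    qed
    then show ?thesis using V'(2) nbhd0_mono by blast
  qed
  have Vsum: "y + z \<in> Vs n" if "y \<in> Vs (Suc n)" "z \<in> Vs (Suc n)" for y z n
    unfolding Vs_def
  proof (intro CollectI ballI impI)
    fix u assume u: "u \<in> B" "0 \<le> u \<and> u \<le> vabs (y + z)"
    have ule: "u \<le> vabs y + vabs z" using order_trans[OF conjunct2[OF u(2)] vabs_triangle[of y z]] .
    define u1 where "u1 = inf u (vabs y)"
    define u2 where "u2 = u - u1"
    have u1p: "0 \<le> u1" "u1 \<le> vabs y" "u1 \<le> u" unfolding u1_def using u vabs_nonneg[of y] by auto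
    have u2p: "0 \<le> u2" "u2 \<le> vabs z" unfolding u2_def u1_def
      using riesz1[of u "vabs y" "vabs z"] u ule vabs_nonneg[of z] by auto
    have u2u: "u2 \<le> u" unfolding u2_def using u1p by simp
    have u1B: "u1 \<in> B" using Bsol[OF u(1)] u1p u by (simp add: vabs_pos)
    have u2B: "u2 \<in> B" using Bsol[OF u(1)] u2p u2u u by (simp add: vabs_pos)
    have "u1 \<in> Ws (Suc n)" using that(1) u1B u1p unfolding Vs_def by blast
    moreover have "u2 \<in> Ws (Suc n)" using that(2) u2B u2p unfolding Vs_def by blast
    ultimately have "u1 + u2 \<in> Ws n" by (rule Wsum)
    then show "u \<in> Ws n" unfolding u2_def by simp
  qed
  have nseq: "normal_seq \<tau> Vs" unfolding normal_seq_def using Vnb Vsum by blast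
  have xdc: "x \<in> disjoint_complement (\<Inter>n. Vs n)" unfolding dc_iff
  proof
    fix z assume z: "z \<in> (\<Inter>n. Vs n)"
    define u where "u = inf (vabs x) (vabs z)"
    have up: "0 \<le> u" "u \<le> vabs z" "u \<le> vabs x" unfolding u_def using vabs_nonneg by auto
    have uB: "u \<in> B" using Bsol[OF xB] up by (simp add: vabs_pos)
    have "u \<in> Ws n" for n using z uB up unfolding Vs_def by blast
    then have ub: "d 0 u < 1 / (real n + 1)" for n
    proof -
      have "u \<in> M.mball 0 (1 / (real n + 1))" using inv[of n] \<open>\<And>n. u \<in> Ws n\<close> by blast
      then show ?thesis by simp
    qed
    have "d 0 u = 0"
    proof (rule ccontr)
      assume "d 0 u \<noteq> 0"
      moreover have "0 \<le> d 0 u" by (rule M.nonneg)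
      ultimately have "0 < d 0 u" by linarith
      then obtain n where "inverse (real (Suc n)) < d 0 u" using reals_Archimedean by blast
      then show False using ub[of n] by (simp add: inverse_eq_divide add.commute)
    qed
    then have "u = 0" using M.zero[of 0 u] B0 uB MB by simp
    then show "inf (vabs x) (vabs z) = 0" unfolding u_def .
  qed
  show ?thesis unfolding carrier_top_def using nseq Vsol xdc by blast
qed

theorem proposition3p7:
  fixes \<tau> :: "'a::{ordered_real_vector,lattice} topology"
  assumes "archimedean_vl TYPE('a)"
    and "locally_solid_on UNIV \<tau>"
  shows "locally_solidly_submetrisable \<tau> \<longleftrightarrow> carrier_top \<tau> = UNIV"
proof
  assume "locally_solidly_submetrisable \<tau>"
  then show "carrier_top \<tau> = UNIV"
    using carrier_from[OF assms(2)] unfolding locally_solidly_submetrisable_def by blast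
next
  assume C: "carrier_top \<tau> = UNIV"
  show "locally_solidly_submetrisable \<tau>" unfolding locally_solidly_submetrisable_def
  proof
    fix x :: 'a
    have "x \<in> carrier_top \<tau>" using C by simp
    then obtain N V where NV: "normal_seq \<tau> V" "\<And>n. solid (V n)" "N = (\<Inter>n. V n)"
      "x \<in> disjoint_complement N"
      unfolding carrier_top_def by blast
    define B where "B = band_generated x"
    have BN: "B \<subseteq> disjoint_complement N" unfolding B_def by (rule bg_sub[OF dc_band NV(4)])
    have sep: "y = 0" if "y \<in> B" "\<forall>n. y \<in> V n" for y
    proof -
      have "y \<in> N" using that NV(3) by blast
      moreover have "y \<in> disjoint_complement N" using that BN by blast
      ultimately have "inf (vabs y) (vabs y) = 0" unfolding dc_iff by blast
      then show ?thesis by (simp add: vabs_eq0)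
    qed
    show "solidly_submetrisable_on (band_generated x) (subtopology \<tau> (band_generated x))"
      unfolding B_def[symmetric]
      by (rule submetr[OF assms(2) NV(1) NV(2)]) (use bg_props sep in \<open>auto simp: B_def\<close>)
  qed
qed


end
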